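(* Let $k\ge 1$ and $\ell$ be integers with $0\le \ell\le k$. Let $G$ be a multigraph (loops allowed) with $n$ vertices and $kn-\ell$ edges. The following statements are equivalent: (1) $G$ is the union of $\ell$ edge-disjoint spanning trees and $k-\ell$ edge-disjoint maps; (2) adding any $\ell$ edges to $G$ results in a $k$-map.
   Context: Graphs are multigraphs, possibly with loops. A map is a graph admitting an orientation of its edges such that every vertex has out-degree exactly $1$ (a loop contributes out-degree $1$ to its vertex); maps here are spanning, i.e. on the full vertex set of $G$. A $k$-map is a graph whose edge set can be partitioned into $k$ edge-disjoint maps on the same vertex set. *)

theory Defs
  imports Main
begin

text \<open>A multigraph (loops allowed) is given by a vertex set V, an edge set E of
edge names, and an endpoint function ep assigning to each edge its (unordered;
the order of the pair is irrelevant below) pair of endpoints.\<close>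

definition multigraph :: "'v set \<Rightarrow> 'e set \<Rightarrow> ('e \<Rightarrow> 'v \<times> 'v) \<Rightarrow> bool" where
  "multigraph V E ep \<longleftrightarrow> finite V \<and> finite E \<and>
     (\<forall>e\<in>E. fst (ep e) \<in> V \<and> snd (ep e) \<in> V)"

definition is_map :: "'v set \<Rightarrow> 'e set \<Rightarrow> ('e \<Rightarrow> 'v \<times> 'v) \<Rightarrow> bool" where
  "is_map V F ep \<longleftrightarrow>
     (\<exists>t. (\<forall>e\<in>F. t e = fst (ep e) \<or> t e = snd (ep e)) \<and>
          (\<forall>v\<in>V. card {e\<in>F. t e = v} = 1))"

definition is_kmap :: "nat \<Rightarrow> 'v set \<Rightarrow> 'e set \<Rightarrow> ('e \<Rightarrow> 'v \<times> 'v) \<Rightarrow> bool" where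
  "is_kmap k V F ep \<longleftrightarrow>
     (\<exists>c::'e \<Rightarrow> nat. (\<forall>e\<in>F. c e < k) \<and> (\<forall>i<k. is_map V {e\<in>F. c e = i} ep))"

definition walk :: "'e set \<Rightarrow> ('e \<Rightarrow> 'v \<times> 'v) \<Rightarrow> 'v list \<Rightarrow> 'e list \<Rightarrow> bool" where
  "walk T ep vs es \<longleftrightarrow> length vs = Suc (length es) \<and>
     (\<forall>i<length es. es ! i \<in> T \<and>
        (ep (es ! i) = (vs ! i, vs ! Suc i) \<or> ep (es ! i) = (vs ! Suc i, vs ! i)))"

definition connected_on :: "'v set \<Rightarrow> 'e set \<Rightarrow> ('e \<Rightarrow> 'v \<times> 'v) \<Rightarrow> bool" where
  "connected_on V T ep \<longleftrightarrow>
     (\<forall>u\<in>V. \<forall>v\<in>V. \<exists>vs es. walk T ep vs es \<and> hd vs = u \<and> last vs = v)"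

text \<open>Acyclic: no closed trail (closed walk of positive length with distinct
edges); in a multigraph loops and parallel edges are cycles.\<close>

definition acyclic_edges :: "'e set \<Rightarrow> ('e \<Rightarrow> 'v \<times> 'v) \<Rightarrow> bool" where
  "acyclic_edges T ep \<longleftrightarrow>
     \<not> (\<exists>vs es. walk T ep vs es \<and> es \<noteq> [] \<and> distinct es \<and> hd vs = last vs)"

definition spanning_tree :: "'v set \<Rightarrow> 'e set \<Rightarrow> ('e \<Rightarrow> 'v \<times> 'v) \<Rightarrow> bool" where
  "spanning_tree V T ep \<longleftrightarrow> connected_on V T ep \<and> acyclic_edges T ep"

definition trees_and_maps :: "nat \<Rightarrow> nat \<Rightarrow> 'v set \<Rightarrow> 'e set \<Rightarrow> ('e \<Rightarrow> 'v \<times> 'v) \<Rightarrow> bool" where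
  "trees_and_maps l k V E ep \<longleftrightarrow>
     (\<exists>c::'e \<Rightarrow> nat. (\<forall>e\<in>E. c e < k) \<and>
        (\<forall>i<l. spanning_tree V {e\<in>E. c e = i} ep) \<and>
        (\<forall>i. l \<le> i \<and> i < k \<longrightarrow> is_map V {e\<in>E. c e = i} ep))"

text \<open>Adding l new edges with endpoints f 0, ..., f (l-1) (loops allowed).\<close>

definition add_edges :: "'e set \<Rightarrow> nat \<Rightarrow> ('e + nat) set" where
  "add_edges E l = Inl ` E \<union> Inr ` {..<l}"

end

theory Submission
  imports Defs
begin


lemma walk_Nil: "walk T ep vs [] \<longleftrightarrow> length vs = 1"
  by (simp add: walk_def)

lemma walk_Cons: "walk T ep (v # vs) (e # es) \<longleftrightarrow>
   e \<in> T \<and> (ep e = (v, hd vs) \<or> ep e = (hd vs, v)) \<and> vs \<noteq> [] \<and> walk T ep vs es"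
proof
  assume w: "walk T ep (v # vs) (e # es)"
  hence ne: "vs \<noteq> []" and len: "length vs = Suc (length es)" by (auto simp: walk_def)
  have 0: "e \<in> T \<and> (ep e = (v, hd vs) \<or> ep e = (hd vs, v))"
    using w ne unfolding walk_def by (auto simp: hd_conv_nth)
  have "walk T ep vs es" unfolding walk_def
  proof (rule conjI[OF len], intro allI impI)
    fix i assume "i < length es"
    thus "es ! i \<in> T \<and> (ep (es ! i) = (vs ! i, vs ! Suc i) \<or> ep (es ! i) = (vs ! Suc i, vs ! i))"
      using w unfolding walk_def by (metis Suc_less_eq length_Cons nth_Cons_Suc)
  qed
  with 0 ne show "e \<in> T \<and> (ep e = (v, hd vs) \<or> ep e = (hd vs, v)) \<and> vs \<noteq> [] \<and> walk T ep vs es" by auto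
next
  assume a: "e \<in> T \<and> (ep e = (v, hd vs) \<or> ep e = (hd vs, v)) \<and> vs \<noteq> [] \<and> walk T ep vs es"
  have len: "length (v # vs) = Suc (length (e # es))" using a by (simp add: walk_def)
  show "walk T ep (v # vs) (e # es)" unfolding walk_def
  proof (rule conjI[OF len], intro allI impI)
    fix i assume i: "i < length (e # es)"
    show "(e # es) ! i \<in> T \<and> (ep ((e # es) ! i) = ((v # vs) ! i, (v # vs) ! Suc i) \<or>
          ep ((e # es) ! i) = ((v # vs) ! Suc i, (v # vs) ! i))"
    proof (cases i)
      case 0 thus ?thesis using a by (simp add: hd_conv_nth[symmetric])
    next
      case (Suc j) thus ?thesis using a i unfolding walk_def by auto
    qed
  qed
qed

lemma walk_ne: "walk T ep vs es \<Longrightarrow> vs \<noteq> []"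
  by (auto simp: walk_def)

lemma walk_append:
  "walk T ep vs1 es1 \<Longrightarrow> walk T ep vs2 es2 \<Longrightarrow> last vs1 = hd vs2 \<Longrightarrow>
   walk T ep (vs1 @ tl vs2) (es1 @ es2) \<and> hd (vs1 @ tl vs2) = hd vs1 \<and> last (vs1 @ tl vs2) = last vs2"
proof (induction es1 arbitrary: vs1)
  case Nil
  then obtain u where "vs1 = [u]" by (auto simp: walk_def length_Suc_conv)
  moreover have "vs2 \<noteq> []" using Nil walk_ne by blast
  ultimately show ?case using Nil by (cases vs2) auto
next
  case (Cons e es1)
  then obtain v vs where vs1: "vs1 = v # vs" by (cases vs1) (auto simp: walk_def)
  from Cons.prems vs1 have a: "e \<in> T" "ep e = (v, hd vs) \<or> ep e = (hd vs, v)" "vs \<noteq> []"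
    "walk T ep vs es1" by (auto simp: walk_Cons)
  have lst: "last vs = hd vs2" using Cons.prems vs1 a by auto
  from Cons.IH[OF a(4) Cons.prems(2) lst] have ih:
    "walk T ep (vs @ tl vs2) (es1 @ es2)" "hd (vs @ tl vs2) = hd vs" "last (vs @ tl vs2) = last vs2"
    by auto
  have "walk T ep (v # (vs @ tl vs2)) (e # (es1 @ es2))"
    using a ih by (subst walk_Cons) auto
  moreover have "last (v # (vs @ tl vs2)) = last vs2" using ih a by auto
  ultimately show ?case using vs1 by auto
qed

lemma walk_rev:
  "walk T ep vs es \<Longrightarrow> walk T ep (rev vs) (rev es)"
proof (induction es arbitrary: vs)
  case Nil thus ?case by (simp add: walk_def)
next
  case (Cons e es)
  then obtain v vs' where vs: "vs = v # vs'" by (cases vs) (auto simp: walk_def)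
  from Cons.prems vs have a: "e \<in> T" "ep e = (v, hd vs') \<or> ep e = (hd vs', v)" "vs' \<noteq> []"
    "walk T ep vs' es" by (auto simp: walk_Cons)
  have w1: "walk T ep (rev vs') (rev es)" using Cons.IH a by auto
  have w2: "walk T ep [hd vs', v] [e]" using a by (auto simp: walk_Cons walk_Nil)
  have "last (rev vs') = hd [hd vs', v]" using a by (simp add: last_rev)
  from walk_append[OF w1 w2 this] show ?case using vs by simp
qed

definition reach :: "'e set \<Rightarrow> ('e \<Rightarrow> 'v \<times> 'v) \<Rightarrow> 'v \<Rightarrow> 'v \<Rightarrow> bool" where
  "reach T ep u v \<longleftrightarrow> (\<exists>vs es. walk T ep vs es \<and> hd vs = u \<and> last vs = v)"

lemma reach_sym: "reach T ep u v \<Longrightarrow> reach T ep v u"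
  unfolding reach_def by (metis walk_rev walk_ne hd_rev last_rev)

lemma reach_trans: "reach T ep u v \<Longrightarrow> reach T ep v w \<Longrightarrow> reach T ep u w"
  unfolding reach_def by (metis walk_append)

lemma reach_refl: "reach T ep u u"
  unfolding reach_def by (rule exI[of _ "[u]"], rule exI[of _ "[]"]) (simp add: walk_def)

lemma reach_step: "e \<in> T \<Longrightarrow> ep e = (u, w) \<or> ep e = (w, u) \<Longrightarrow> reach T ep w v \<Longrightarrow> reach T ep u v"
  unfolding reach_def
  apply clarify
  subgoal for vs es
    apply (rule exI[of _ "u # vs"], rule exI[of _ "e # es"])
    using walk_ne by (fastforce simp: walk_Cons)
  done



definition hd_of :: "('e \<Rightarrow> 'v \<times> 'v) \<Rightarrow> ('e \<Rightarrow> 'v) \<Rightarrow> 'e \<Rightarrow> 'v" where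
  "hd_of ep t e = (if t e = fst (ep e) then snd (ep e) else fst (ep e))"

definition parb :: "'v set \<Rightarrow> 'v \<Rightarrow> ('e \<Rightarrow> 'v) \<Rightarrow> ('e \<Rightarrow> 'v) \<Rightarrow> 'e set \<Rightarrow> bool" where
  "parb R r t h F \<longleftrightarrow> (\<exists>d::'v \<Rightarrow> nat. \<forall>e\<in>F. t e \<in> R - {r} \<and> h e \<in> R \<and> d (h e) < d (t e))
     \<and> (\<forall>v\<in>R - {r}. card {e\<in>F. t e = v} = 1)"

lemma ep_th: "t e = fst (ep e) \<or> t e = snd (ep e) \<Longrightarrow>
  ep e = (t e, hd_of ep t e) \<or> ep e = (hd_of ep t e, t e)"
  by (cases "ep e") (auto simp: hd_of_def)

lemma key_edge:
  fixes d :: "'v \<Rightarrow> nat"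
  assumes "t e = fst (ep e) \<or> t e = snd (ep e)" "d (hd_of ep t e) < d (t e)"
    "ep e = (v, w) \<or> ep e = (w, v)" "d w \<le> d v"
  shows "t e = v"
proof -
  obtain a b where ab: "ep e = (a, b)" by (cases "ep e")
  show ?thesis using assms unfolding ab hd_of_def by (auto split: if_splits)
qed

lemma arb_tree:
  assumes pb: "parb V r t (hd_of ep t) A" and rV: "r \<in> V"
    and tl: "\<forall>e\<in>A. t e = fst (ep e) \<or> t e = snd (ep e)"
  shows "spanning_tree V A ep"
proof -
  obtain d :: "_ \<Rightarrow> nat" where d: "\<forall>e\<in>A. t e \<in> V - {r} \<and> hd_of ep t e \<in> V \<and> d (hd_of ep t e) < d (t e)"
    using pb unfolding parb_def by blast
  have c1: "\<forall>v\<in>V - {r}. card {e\<in>A. t e = v} = 1" using pb unfolding parb_def by blast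
  have toroot: "u \<in> V \<Longrightarrow> reach A ep u r" for u
  proof (induction "d u" arbitrary: u rule: less_induct)
    case less
    show ?case
    proof (cases "u = r")
      case True thus ?thesis by (simp add: reach_refl)
    next
      case False
      with less.prems c1 have "card {e\<in>A. t e = u} = 1" by auto
      then obtain e where e: "e \<in> A" "t e = u" by (metis (mono_tags, lifting) card_1_singletonE mem_Collect_eq singletonI)
      with d have "hd_of ep t e \<in> V" "d (hd_of ep t e) < d u" by auto
      with less.hyps have "reach A ep (hd_of ep t e) r" by blast
      moreover have "ep e = (u, hd_of ep t e) \<or> ep e = (hd_of ep t e, u)"
        using ep_th[of t e ep] tl e by auto
      ultimately show ?thesis using reach_step e by metis
    qed
  qed
  have conn: "connected_on V A ep"
    unfolding connected_on_def
  proof (intro ballI)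
    fix u v assume "u \<in> V" "v \<in> V"
    hence "reach A ep u v" using toroot reach_sym reach_trans by metis
    thus "\<exists>vs es. walk A ep vs es \<and> hd vs = u \<and> last vs = v" by (simp add: reach_def)
  qed
  have acyc: "acyclic_edges A ep"
    unfolding acyclic_edges_def
  proof
    assume "\<exists>vs es. walk A ep vs es \<and> es \<noteq> [] \<and> distinct es \<and> hd vs = last vs"
    then obtain vs es where w: "walk A ep vs es" and ne: "es \<noteq> []" and dis: "distinct es"
      and cl: "hd vs = last vs" by blast
    define m where "m = length es"
    have m1: "m \<ge> 1" using ne m_def by (cases es) auto
    have lv: "length vs = Suc m" using w m_def by (simp add: walk_def)
    have vm: "vs ! m = vs ! 0" using cl lv
      by (metis diff_Suc_1 hd_conv_nth last_conv_nth list.size(3) nat.distinct(1))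
    have ed: "\<And>j. j < m \<Longrightarrow> es ! j \<in> A \<and> (ep (es ! j) = (vs ! j, vs ! Suc j) \<or> ep (es ! j) = (vs ! Suc j, vs ! j))"
      using w m_def by (simp add: walk_def)
    define M where "M = Max ((\<lambda>j. d (vs ! j)) ` {..<m})"
    obtain i where i: "i < m" "d (vs ! i) = M"
    proof -
      have "M \<in> (\<lambda>j. d (vs ! j)) ` {..<m}" unfolding M_def using m1
      proof (intro Max_in)
        have "(0::nat) \<in> {..<m}" using m1 by simp
        thus "(\<lambda>j. d (vs ! j)) ` {..<m} \<noteq> {}" by blast
      qed auto
      thus ?thesis using that by auto
    qed
    have le: "j \<le> m \<Longrightarrow> d (vs ! j) \<le> M" for j
    proof (cases "j = m")
      case True thus ?thesis using vm m1 unfolding M_def by (simp add: Max_ge)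
    next
      case False
      assume "j \<le> m" with False have "j < m" by simp
      thus ?thesis unfolding M_def by (simp add: Max_ge)
    qed
    define v where "v = vs ! i"
    have at: "e \<in> A \<Longrightarrow> ep e = (v, w) \<or> ep e = (w, v) \<Longrightarrow> d w \<le> d v \<Longrightarrow> t e = v" for e w
      using key_edge[of t e ep d v w] tl d by blast
    have e1: "t (es ! i) = v" using ed[OF i(1)] at[of "es ! i" "vs ! Suc i"] le[of "Suc i"] i
      unfolding v_def by auto
    define j where "j = (if i = 0 then m - 1 else i - 1)"
    have j: "j < m" using i m1 j_def by auto
    have ej: "ep (es ! j) = (vs ! j, v) \<or> ep (es ! j) = (v, vs ! j)"
      using ed[OF j] unfolding j_def v_def using i m1 vm by (auto split: if_splits)
    have e2: "t (es ! j) = v" using at[of "es ! j" "vs ! j"] ej ed[OF j] le[of j] j i unfolding v_def by auto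
    show False
    proof (cases "m = 1")
      case True
      hence "i = 0" using i by auto
      hence "ep (es ! 0) = (v, v)" using ed[of 0] True vm unfolding v_def by auto
      moreover have "d (hd_of ep t (es ! 0)) < d (t (es ! 0))" using d ed[of 0] m1 by auto
      ultimately show False using e1 \<open>i = 0\<close> by (simp add: hd_of_def)
    next
      case False
      hence ij: "i \<noteq> j" using m1 i j_def by auto
      have "es ! i \<noteq> es ! j" using dis ij i j m_def by (simp add: nth_eq_iff_index_eq)
      moreover have "v \<in> V - {r}" using d ed[OF i(1)] e1 by auto
      hence "card {e\<in>A. t e = v} = 1" using c1 by auto
      moreover have "es ! i \<in> {e\<in>A. t e = v}" "es ! j \<in> {e\<in>A. t e = v}"
        using ed[OF i(1)] ed[OF j] e1 e2 by auto
      ultimately show False by (metis card_1_singletonE singletonD)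
    qed
  qed
  show ?thesis using conn acyc by (simp add: spanning_tree_def)
qed



definition lv :: "'e set \<Rightarrow> ('e \<Rightarrow> 'v) \<Rightarrow> ('e \<Rightarrow> 'v) \<Rightarrow> 'v set \<Rightarrow> nat" where
  "lv S t h X = card {e\<in>S. t e \<in> X \<and> h e \<notin> X}"

lemma card_ind: "finite S \<Longrightarrow> card {e\<in>S. P e} = (\<Sum>e\<in>S. if P e then 1 else 0 :: nat)"
  by (simp add: sum.If_cases Int_def conj_commute)

lemma lv_submod:
  assumes "finite S"
  shows "lv S t h (X \<inter> Z) + lv S t h (X \<union> Z) \<le> lv S t h X + lv S t h Z"
proof -
  have "lv S t h (X \<inter> Z) + lv S t h (X \<union> Z) =
    (\<Sum>e\<in>S. (if t e \<in> X \<inter> Z \<and> h e \<notin> X \<inter> Z then 1 else 0) + (if t e \<in> X \<union> Z \<and> h e \<notin> X \<union> Z then 1 else 0))"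
    unfolding lv_def using assms by (simp add: card_ind sum.distrib)
  also have "\<dots> \<le> (\<Sum>e\<in>S. (if t e \<in> X \<and> h e \<notin> X then 1 else 0) + (if t e \<in> Z \<and> h e \<notin> Z then 1 else 0))"
    by (rule sum_mono) auto
  also have "\<dots> = lv S t h X + lv S t h Z"
    unfolding lv_def using assms by (simp add: card_ind sum.distrib)
  finally show ?thesis .
qed

lemma edm_step:
  assumes fV: "finite V" and fD: "finite D" and rR: "r \<in> R" and RV: "R \<subseteq> V" and RneV: "R \<noteq> V"
    and FD: "F \<subseteq> D" and Dv: "\<forall>e\<in>D. t e \<in> V \<and> h e \<in> V"
    and FR: "\<forall>e\<in>F. t e \<in> R"
    and hyp: "\<forall>X. X \<subseteq> V - {r} \<and> X \<noteq> {} \<longrightarrow> Suc l \<le> lv D t h X"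
    and inv: "\<forall>X. X \<subseteq> V - {r} \<and> X \<noteq> {} \<longrightarrow> l \<le> lv (D - F) t h X"
  shows "\<exists>e0\<in>D - F. t e0 \<notin> R \<and> h e0 \<in> R \<and>
     (\<forall>X. X \<subseteq> V - {r} \<and> X \<noteq> {} \<and> t e0 \<in> X \<and> h e0 \<notin> X \<longrightarrow> l < lv (D - F) t h X)"
proof -
  have fDF: "finite (D - F)" using fD by simp
  have lvR: "lv (D - F) t h Y = lv D t h Y" if "Y \<inter> R = {}" for Y
  proof -
    have "{e\<in>D - F. t e \<in> Y \<and> h e \<notin> Y} = {e\<in>D. t e \<in> Y \<and> h e \<notin> Y}"
      using FR that by auto
    thus ?thesis by (simp add: lv_def)
  qed
  define TT where "TT = {X. X \<subseteq> V - {r} \<and> X \<noteq> {} \<and> lv (D - F) t h X \<le> l \<and> X - R \<noteq> {}}"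
  show ?thesis
  proof (cases "TT = {}")
    case True
    have ne: "V - R \<noteq> {}" "V - R \<subseteq> V - {r}" using RV RneV rR by auto
    hence "Suc l \<le> lv D t h (V - R)" using hyp by blast
    moreover have "(V - R) \<inter> R = {}" by blast
    ultimately have "lv (D - F) t h (V - R) \<noteq> 0" using lvR[of "V - R"] by simp
    hence "{e\<in>D - F. t e \<in> V - R \<and> h e \<notin> V - R} \<noteq> {}" unfolding lv_def by (metis card.empty)
    then obtain e0 where e0: "e0 \<in> D - F" "t e0 \<in> V - R" "h e0 \<notin> V - R" by blast
    have "h e0 \<in> R" using e0 Dv by auto
    moreover have "l < lv (D - F) t h X" if "X \<subseteq> V - {r}" "X \<noteq> {}" "t e0 \<in> X" for X
    proof -
      have "X \<notin> TT" using True by simp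
      moreover have "X - R \<noteq> {}" using that e0 by auto
      ultimately show ?thesis using that unfolding TT_def by auto
    qed
    ultimately show ?thesis using e0 by blast
  next
    case False
    define m where "m = (LEAST m. \<exists>X\<in>TT. card X = m)"
    have "\<exists>X\<in>TT. card X = m" unfolding m_def
    proof (rule LeastI_ex)
      from False obtain X0 where "X0 \<in> TT" by blast
      thus "\<exists>m. \<exists>X\<in>TT. card X = m" by blast
    qed
    then obtain X where X: "X \<in> TT" "card X = m" by blast
    have Xmin: "card X \<le> card Z" if "Z \<in> TT" for Z
      using X that unfolding m_def by (metis (mono_tags, lifting) Least_le)
    have XV: "X \<subseteq> V - {r}" "X \<noteq> {}" "lv (D - F) t h X \<le> l" "X - R \<noteq> {}" using X unfolding TT_def by auto
    have fX: "finite X" using XV fV finite_subset by blast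
    define Y where "Y = X - R"
    have "Y \<subseteq> V - {r}" "Y \<noteq> {}" using XV Y_def by auto
    hence "Suc l \<le> lv D t h Y" using hyp by blast
    moreover have "Y \<inter> R = {}" using Y_def by blast
    ultimately have lY: "Suc l \<le> lv (D - F) t h Y" using lvR[of Y] by simp
    have "\<exists>e0\<in>D - F. t e0 \<in> Y \<and> h e0 \<in> X \<inter> R"
    proof (rule ccontr)
      assume "\<not> ?thesis"
      hence "{e\<in>D - F. t e \<in> Y \<and> h e \<notin> Y} \<subseteq> {e\<in>D - F. t e \<in> X \<and> h e \<notin> X}"
        unfolding Y_def by auto
      hence "lv (D - F) t h Y \<le> lv (D - F) t h X" unfolding lv_def
        by (intro card_mono) (use fD in auto)
      thus False using lY XV by auto
    qed
    then obtain e0 where e0: "e0 \<in> D - F" "t e0 \<in> Y" "h e0 \<in> X \<inter> R" by blast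
    have "l < lv (D - F) t h Z" if Z: "Z \<subseteq> V - {r}" "Z \<noteq> {}" "t e0 \<in> Z" "h e0 \<notin> Z" for Z
    proof (rule ccontr)
      assume "\<not> ?thesis"
      hence lZ: "lv (D - F) t h Z \<le> l" by simp
      have s: "lv (D - F) t h (X \<inter> Z) + lv (D - F) t h (X \<union> Z) \<le> lv (D - F) t h X + lv (D - F) t h Z"
        using lv_submod[OF fDF] .
      have i1: "X \<inter> Z \<subseteq> V - {r}" "X \<inter> Z \<noteq> {}" using XV Z e0 Y_def by auto
      have i2: "X \<union> Z \<subseteq> V - {r}" "X \<union> Z \<noteq> {}" using XV Z by auto
      have "l \<le> lv (D - F) t h (X \<union> Z)" using inv i2 by blast
      hence "lv (D - F) t h (X \<inter> Z) \<le> l" using s lZ XV by linarith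
      moreover have "(X \<inter> Z) - R \<noteq> {}" using e0 Z Y_def by auto
      ultimately have "X \<inter> Z \<in> TT" using i1 unfolding TT_def by auto
      hence "card X \<le> card (X \<inter> Z)" by (rule Xmin)
      moreover have "card (X \<inter> Z) < card X"
        using fX e0 Z by (intro psubset_card_mono) auto
      ultimately show False by simp
    qed
    thus ?thesis using e0 Y_def by blast
  qed
qed



lemma parb_ext:
  assumes pb: "parb R r t h F" and e0: "e0 \<notin> F" "t e0 \<notin> R" "h e0 \<in> R" and rR: "r \<in> R"
  shows "parb (insert (t e0) R) r t h (insert e0 F)"
proof -
  obtain d :: "_ \<Rightarrow> nat" where d: "\<forall>e\<in>F. t e \<in> R - {r} \<and> h e \<in> R \<and> d (h e) < d (t e)"
    using pb unfolding parb_def by blast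
  have c: "\<forall>v\<in>R - {r}. card {e\<in>F. t e = v} = 1" using pb unfolding parb_def by blast
  define d' where "d' = d(t e0 := Suc (d (h e0)))"
  have "\<forall>e\<in>insert e0 F. t e \<in> insert (t e0) R - {r} \<and> h e \<in> insert (t e0) R \<and> d' (h e) < d' (t e)"
    using d e0 rR unfolding d'_def by auto
  moreover have "card {e\<in>insert e0 F. t e = v} = 1" if "v \<in> insert (t e0) R - {r}" for v
  proof (cases "v = t e0")
    case True
    hence "{e\<in>insert e0 F. t e = v} = {e0}" using d e0 by auto
    thus ?thesis by simp
  next
    case False
    hence "{e\<in>insert e0 F. t e = v} = {e\<in>F. t e = v}" by auto
    thus ?thesis using c that False by auto
  qed
  ultimately show ?thesis unfolding parb_def by blast
qed

lemma edm_grow: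
  assumes fV: "finite V" and fD: "finite D" and rV: "r \<in> V"
    and Dv: "\<forall>e\<in>D. t e \<in> V \<and> h e \<in> V"
    and hyp: "\<forall>X. X \<subseteq> V - {r} \<and> X \<noteq> {} \<longrightarrow> Suc l \<le> lv D t h X"
  shows "card (V - R) = n \<Longrightarrow> R \<subseteq> V \<Longrightarrow> r \<in> R \<Longrightarrow> F \<subseteq> D \<Longrightarrow> parb R r t h F \<Longrightarrow>
    (\<forall>X. X \<subseteq> V - {r} \<and> X \<noteq> {} \<longrightarrow> l \<le> lv (D - F) t h X) \<Longrightarrow>
    \<exists>F'. F' \<subseteq> D \<and> parb V r t h F' \<and> (\<forall>X. X \<subseteq> V - {r} \<and> X \<noteq> {} \<longrightarrow> l \<le> lv (D - F') t h X)"
proof (induction n arbitrary: R F rule: less_induct)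
  case (less n)
  show ?case
  proof (cases "R = V")
    case True
    show ?thesis by (rule exI[of _ F]) (use less.prems(4,5,6) True in simp)
  next
    case False
    have FR: "\<forall>e\<in>F. t e \<in> R" using less.prems(5) unfolding parb_def by (metis Diff_iff)
    obtain e0 where e0: "e0 \<in> D - F" "t e0 \<notin> R" "h e0 \<in> R"
      "\<forall>X. X \<subseteq> V - {r} \<and> X \<noteq> {} \<and> t e0 \<in> X \<and> h e0 \<notin> X \<longrightarrow> l < lv (D - F) t h X"
      using edm_step[OF fV fD less.prems(3) less.prems(2) False less.prems(4) Dv FR hyp less.prems(6)]
      by (elim bexE conjE) (rule that)
    define R' where "R' = insert (t e0) R"
    define F' where "F' = insert e0 F"
    have pb: "parb R' r t h F'" unfolding R'_def F'_def
      using parb_ext[OF less.prems(5) _ e0(2,3) less.prems(3)] e0(1) by simp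
    have inv: "l \<le> lv (D - F') t h X" if X: "X \<subseteq> V - {r}" "X \<noteq> {}" for X
    proof (cases "t e0 \<in> X \<and> h e0 \<notin> X")
      case True
      have lt: "l < lv (D - F) t h X" using e0(4) X True by simp
      have eq: "{e\<in>D - F. t e \<in> X \<and> h e \<notin> X} = insert e0 {e\<in>D - F'. t e \<in> X \<and> h e \<notin> X}"
        using True e0(1) unfolding F'_def by blast
      have fin: "finite {e\<in>D - F'. t e \<in> X \<and> h e \<notin> X}" using fD by simp
      have nin: "e0 \<notin> {e\<in>D - F'. t e \<in> X \<and> h e \<notin> X}" unfolding F'_def by simp
      have "lv (D - F) t h X = Suc (lv (D - F') t h X)" unfolding lv_def eq
        using fin nin by simp
      thus ?thesis using lt by linarith
    next
      case False
      hence "{e\<in>D - F. t e \<in> X \<and> h e \<notin> X} = {e\<in>D - F'. t e \<in> X \<and> h e \<notin> X}"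
        unfolding F'_def by blast
      hence "lv (D - F) t h X = lv (D - F') t h X" unfolding lv_def by simp
      moreover have "l \<le> lv (D - F) t h X" using less.prems(6) X by blast
      ultimately show ?thesis by simp
    qed
    have lt: "card (V - R') < n"
    proof -
      have "V - R' = (V - R) - {t e0}" unfolding R'_def by blast
      moreover have "t e0 \<in> V - R" using e0 Dv by auto
      ultimately have "card (V - R') < card (V - R)" using fV card_Diff1_less[of "V - R" "t e0"] by simp
      thus ?thesis using less.prems(1) by simp
    qed
    have RV': "R' \<subseteq> V" using less.prems(2) e0 Dv unfolding R'_def by auto
    have rR': "r \<in> R'" using less.prems(3) unfolding R'_def by auto
    have FD': "F' \<subseteq> D" using less.prems(4) e0 unfolding F'_def by auto
    show ?thesis
      using less.IH[OF lt refl RV' rR' FD' pb] inv by blast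
  qed
qed

lemma edmonds:
  assumes fV: "finite V" and rV: "r \<in> V"
  shows "finite D \<Longrightarrow> \<forall>e\<in>D. t e \<in> V \<and> h e \<in> V \<Longrightarrow>
    \<forall>X. X \<subseteq> V - {r} \<and> X \<noteq> {} \<longrightarrow> l \<le> lv D t h X \<Longrightarrow>
    \<exists>A. (\<forall>i<l. A i \<subseteq> D \<and> parb V r t h (A i)) \<and> (\<forall>i<l. \<forall>j<l. i \<noteq> j \<longrightarrow> A i \<inter> A j = {})"
proof (induction l arbitrary: D)
  case 0 thus ?case by auto
next
  case (Suc l)
  have pb0: "parb {r} r t h {}" unfolding parb_def by auto
  have inv0: "\<forall>X. X \<subseteq> V - {r} \<and> X \<noteq> {} \<longrightarrow> l \<le> lv (D - {}) t h X"
    using Suc.prems(3) by (simp add: Suc_leD)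
  obtain F where F: "F \<subseteq> D" "parb V r t h F" "\<forall>X. X \<subseteq> V - {r} \<and> X \<noteq> {} \<longrightarrow> l \<le> lv (D - F) t h X"
  proof -
    have "{r} \<subseteq> V" using rV by simp
    from edm_grow[OF fV Suc.prems(1) rV Suc.prems(2) Suc.prems(3) refl this _ _ pb0 inv0]
    show ?thesis using that by blast
  qed
  obtain A where A: "\<forall>i<l. A i \<subseteq> D - F \<and> parb V r t h (A i)" "\<forall>i<l. \<forall>j<l. i \<noteq> j \<longrightarrow> A i \<inter> A j = {}"
  proof -
    have "finite (D - F)" using Suc.prems(1) by simp
    moreover have "\<forall>e\<in>D - F. t e \<in> V \<and> h e \<in> V" using Suc.prems(2) by simp
    ultimately show ?thesis using Suc.IH[of "D - F"] F(3) that by blast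
  qed
  define A' where "A' = A(l := F)"
  have "\<forall>i<Suc l. A' i \<subseteq> D \<and> parb V r t h (A' i)"
  proof (intro allI impI)
    fix i assume i: "i < Suc l"
    show "A' i \<subseteq> D \<and> parb V r t h (A' i)"
    proof (cases "i = l")
      case True thus ?thesis using F(1,2) unfolding A'_def by simp
    next
      case False
      hence "i < l" using i by simp
      hence "A i \<subseteq> D - F \<and> parb V r t h (A i)" using A(1) by blast
      thus ?thesis using False unfolding A'_def by auto
    qed
  qed
  moreover have "\<forall>i<Suc l. \<forall>j<Suc l. i \<noteq> j \<longrightarrow> A' i \<inter> A' j = {}"
  proof (intro allI impI)
    fix i j assume ij: "i < Suc l" "j < Suc l" "i \<noteq> j"
    show "A' i \<inter> A' j = {}"
    proof (cases "i = l")
      case True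
      hence "j < l" using ij by simp
      hence "A j \<subseteq> D - F" using A(1) by blast
      thus ?thesis using True ij unfolding A'_def by auto
    next
      case False
      show ?thesis
      proof (cases "j = l")
        case True
        hence "i < l" using ij False by simp
        hence "A i \<subseteq> D - F" using A(1) by blast
        thus ?thesis using True False unfolding A'_def by auto
      next
        case False2: False
        hence "i < l" "j < l" using ij False by auto
        hence "A i \<inter> A j = {}" using A(2) ij by blast
        thus ?thesis using False False2 unfolding A'_def by simp
      qed
    qed
  qed
  ultimately show ?case by blast
qed



lemma card_tail_sum:
  assumes "finite E" "finite X"
  shows "card {e\<in>E. t e \<in> X} = (\<Sum>v\<in>X. card {e\<in>E. t e = v})"
proof -
  have "{e\<in>E. t e \<in> X} = (\<Union>v\<in>X. {e\<in>E. t e = v})" by auto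
  moreover have "card (\<Union>v\<in>X. {e\<in>E. t e = v}) = (\<Sum>v\<in>X. card {e\<in>E. t e = v})"
    using assms by (intro card_UN_disjoint) auto
  ultimately show ?thesis by simp
qed

lemma kmap_orient:
  assumes "is_kmap k V F ep"
  shows "\<exists>t. (\<forall>x\<in>F. t x = fst (ep x) \<or> t x = snd (ep x)) \<and> (\<forall>v\<in>V. card {x\<in>F. t x = v} = k)"
proof -
  obtain c :: "_ \<Rightarrow> nat" where c: "\<forall>e\<in>F. c e < k" "\<forall>i<k. is_map V {e\<in>F. c e = i} ep"
    using assms unfolding is_kmap_def by blast
  have "\<forall>i<k. \<exists>t. (\<forall>e\<in>{e\<in>F. c e = i}. t e = fst (ep e) \<or> t e = snd (ep e)) \<and>
          (\<forall>v\<in>V. card {e\<in>{e\<in>F. c e = i}. t e = v} = 1)"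
    using c(2) unfolding is_map_def by blast
  hence "\<forall>i. \<exists>t. i < k \<longrightarrow> (\<forall>e\<in>{e\<in>F. c e = i}. t e = fst (ep e) \<or> t e = snd (ep e)) \<and>
          (\<forall>v\<in>V. card {e\<in>{e\<in>F. c e = i}. t e = v} = 1)" by blast
  from choice[OF this] obtain T where T: "\<forall>i<k. (\<forall>e\<in>{e\<in>F. c e = i}. T i e = fst (ep e) \<or> T i e = snd (ep e)) \<and>
          (\<forall>v\<in>V. card {e\<in>{e\<in>F. c e = i}. T i e = v} = 1)"
    by blast
  define t where "t x = T (c x) x" for x
  have "\<forall>x\<in>F. t x = fst (ep x) \<or> t x = snd (ep x)" using T c(1) unfolding t_def by auto
  moreover have "card {x\<in>F. t x = v} = k" if v: "v \<in> V" for v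
  proof -
    have eq: "{x\<in>F. t x = v} = (\<Union>i<k. {e\<in>{e\<in>F. c e = i}. T i e = v})"
      using c(1) unfolding t_def by auto
    have c1: "\<And>i. i < k \<Longrightarrow> card {e\<in>{e\<in>F. c e = i}. T i e = v} = 1" using T v by blast
    have "card (\<Union>i<k. {e\<in>{e\<in>F. c e = i}. T i e = v}) = (\<Sum>i<k. card {e\<in>{e\<in>F. c e = i}. T i e = v})"
    proof (intro card_UN_disjoint)
      show "\<forall>i\<in>{..<k}. finite {e\<in>{e\<in>F. c e = i}. T i e = v}"
      proof
        fix i assume "i \<in> {..<k}"
        hence "card {e\<in>{e\<in>F. c e = i}. T i e = v} = 1" using c1 by simp
        thus "finite {e\<in>{e\<in>F. c e = i}. T i e = v}" by (intro card_ge_0_finite) simp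
      qed
    qed auto
    also have "\<dots> = k" using c1 by simp
    finally show ?thesis using eq by simp
  qed
  ultimately show ?thesis by blast
qed

lemma orient_split:
  assumes fS: "finite S" and tl: "\<forall>e\<in>S. t e = fst (ep e) \<or> t e = snd (ep e)"
    and cm: "\<forall>v\<in>V. card {e\<in>S. t e = v} = m" and tV: "\<forall>e\<in>S. t e \<in> V"
  shows "\<exists>g. (\<forall>e\<in>S. g e < m) \<and> (\<forall>j<m. is_map V {e\<in>S. g e = j} ep)"
proof -
  have "\<forall>v. \<exists>b. v \<in> V \<longrightarrow> bij_betw b {e\<in>S. t e = v} {..<m}"
  proof
    fix v show "\<exists>b. v \<in> V \<longrightarrow> bij_betw b {e\<in>S. t e = v} {..<m}"
    proof (cases "v \<in> V")
      case True
      have "finite {e\<in>S. t e = v}" using fS by simp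
      moreover have "card {e\<in>S. t e = v} = card {..<m}" using cm True by simp
      ultimately obtain b where "bij_betw b {e\<in>S. t e = v} {..<m}"
        using finite_same_card_bij[of "{e\<in>S. t e = v}" "{..<m}"] by blast
      thus ?thesis by blast
    qed simp
  qed
  from choice[OF this] obtain B where B: "\<forall>v\<in>V. bij_betw (B v) {e\<in>S. t e = v} {..<m}" by blast
  define g where "g e = B (t e) e" for e
  have "\<forall>e\<in>S. g e < m" using B tV unfolding g_def bij_betw_def by auto
  moreover have "is_map V {e\<in>S. g e = j} ep" if j: "j < m" for j
    unfolding is_map_def
  proof (rule exI[of _ t], intro conjI ballI)
    fix e assume "e \<in> {e\<in>S. g e = j}"
    thus "t e = fst (ep e) \<or> t e = snd (ep e)" using tl by auto
  next
    fix v assume v: "v \<in> V"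
    have bv: "bij_betw (B v) {e\<in>S. t e = v} {..<m}" using B v by blast
    have "j \<in> B v ` {e\<in>S. t e = v}" using bv j unfolding bij_betw_def by simp
    then obtain e where e: "e \<in> {e\<in>S. t e = v}" "B v e = j" by blast
    have "{e\<in>{e\<in>S. g e = j}. t e = v} = {e}"
    proof
      show "{e} \<subseteq> {e\<in>{e\<in>S. g e = j}. t e = v}" using e unfolding g_def by auto
      show "{e\<in>{e\<in>S. g e = j}. t e = v} \<subseteq> {e}"
      proof
        fix e' assume e': "e' \<in> {e\<in>{e\<in>S. g e = j}. t e = v}"
        hence "e' \<in> {e\<in>S. t e = v}" "B v e' = j" unfolding g_def by auto
        thus "e' \<in> {e}" using e bv unfolding bij_betw_def inj_on_def by auto
      qed
    qed
    thus "card {e\<in>{e\<in>S. g e = j}. t e = v} = 1" by simp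
  qed
  ultimately show ?thesis by blast
qed



lemma card_Inl_Inr: "finite A \<Longrightarrow> finite B \<Longrightarrow> card (Inl ` A \<union> Inr ` B) = card A + card B"
  by (subst card_Un_disjoint) (auto simp: card_image)

lemma loops_orient:
  assumes mg: "multigraph V E ep" and xV: "x \<in> V"
    and kk: "is_kmap k V (add_edges E l) (case_sum ep (\<lambda>i. (x, x)))"
  shows "\<exists>t. (\<forall>e\<in>E. t e = fst (ep e) \<or> t e = snd (ep e)) \<and>
     (\<forall>v\<in>V. card {e\<in>E. t e = v} + (if v = x then l else 0) = k)"
proof -
  obtain t' where t': "\<forall>y\<in>add_edges E l. t' y = fst (case_sum ep (\<lambda>i. (x, x)) y) \<or> t' y = snd (case_sum ep (\<lambda>i. (x, x)) y)"
    "\<forall>v\<in>V. card {y\<in>add_edges E l. t' y = v} = k"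
    using kmap_orient[OF kk] by blast
  define t where "t e = t' (Inl e)" for e
  have fE: "finite E" using mg unfolding multigraph_def by blast
  have "\<forall>e\<in>E. t e = fst (ep e) \<or> t e = snd (ep e)"
  proof
    fix e assume "e \<in> E"
    hence "Inl e \<in> add_edges E l" unfolding add_edges_def by blast
    thus "t e = fst (ep e) \<or> t e = snd (ep e)" using t'(1) unfolding t_def by fastforce
  qed
  moreover have "card {e\<in>E. t e = v} + (if v = x then l else 0) = k" if v: "v \<in> V" for v
  proof -
    have tr: "\<forall>i<l. t' (Inr i) = x"
    proof (intro allI impI)
      fix i assume "i < l"
      hence "Inr i \<in> add_edges E l" unfolding add_edges_def by blast
      thus "t' (Inr i) = x" using t'(1) by fastforce
    qed
    have "{y\<in>add_edges E l. t' y = v} = Inl ` {e\<in>E. t e = v} \<union> Inr ` (if v = x then {..<l} else {})"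
      unfolding add_edges_def t_def using tr by auto
    hence "card {y\<in>add_edges E l. t' y = v} = card {e\<in>E. t e = v} + card (if v = x then {..<l} else {})"
      using fE by (simp add: card_Inl_Inr)
    thus ?thesis using t'(2) v by (simp split: if_splits)
  qed
  ultimately show ?thesis by blast
qed

lemma dir21:
  fixes V :: "'v set" and E :: "'e set" and ep :: "'e \<Rightarrow> 'v \<times> 'v" and k l :: nat
  assumes lk: "l \<le> k" and mg: "multigraph V E ep"
    and R: "\<forall>f :: nat \<Rightarrow> 'v \<times> 'v. (\<forall>i<l. fst (f i) \<in> V \<and> snd (f i) \<in> V) \<longrightarrow>
        is_kmap k V (add_edges E l) (case_sum ep f)"
  shows "trees_and_maps l k V E ep"
proof -
  have fV: "finite V" and fE: "finite E" and Ev: "\<forall>e\<in>E. fst (ep e) \<in> V \<and> snd (ep e) \<in> V"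
    using mg unfolding multigraph_def by auto
  have LO: "\<exists>t. (\<forall>e\<in>E. t e = fst (ep e) \<or> t e = snd (ep e)) \<and>
     (\<forall>v\<in>V. card {e\<in>E. t e = v} + (if v = x then l else 0) = k)" if xV: "x \<in> V" for x
  proof -
    have "is_kmap k V (add_edges E l) (case_sum ep (\<lambda>i. (x, x)))" using R xV by auto
    thus ?thesis using loops_orient[OF mg xV] by blast
  qed
  show ?thesis
  proof (cases "V = {}")
    case True
    hence E0: "E = {}" using Ev by auto
    have st: "spanning_tree V {} ep" unfolding spanning_tree_def connected_on_def acyclic_edges_def
      using True by (auto simp: walk_def)
    have im: "is_map V {} ep" unfolding is_map_def using True by auto
    show ?thesis unfolding trees_and_maps_def using E0 st im by auto
  next
    case False
    then obtain r where rV: "r \<in> V" by blast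
    obtain t where tl: "\<forall>e\<in>E. t e = fst (ep e) \<or> t e = snd (ep e)"
      and tc: "\<forall>v\<in>V. card {e\<in>E. t e = v} + (if v = r then l else 0) = k"
      using LO[OF rV] by blast
    define h where "h = hd_of ep t"
    have tV: "\<forall>e\<in>E. t e \<in> V \<and> h e \<in> V" using tl Ev unfolding h_def hd_of_def by auto
    have sp: "card {e\<in>E. fst (ep e) \<in> X \<and> snd (ep e) \<in> X} + l \<le> k * card X"
      if xX: "x \<in> X" and XV: "X \<subseteq> V" for x X
    proof -
      have xV: "x \<in> V" using xX XV by blast
      obtain tx where tx1: "\<forall>e\<in>E. tx e = fst (ep e) \<or> tx e = snd (ep e)"
        and tx2: "\<forall>v\<in>V. card {e\<in>E. tx e = v} + (if v = x then l else 0) = k"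
        using LO[OF xV] by blast
      have fX: "finite X" using XV fV finite_subset by blast
      have sub: "{e\<in>E. fst (ep e) \<in> X \<and> snd (ep e) \<in> X} \<subseteq> {e\<in>E. tx e \<in> X}"
        using tx1 by auto
      have "card {e\<in>E. tx e \<in> X} + l = (\<Sum>v\<in>X. card {e\<in>E. tx e = v}) + (\<Sum>v\<in>X. if v = x then l else 0)"
        using card_tail_sum[OF fE fX] fX xX by simp
      also have "\<dots> = (\<Sum>v\<in>X. card {e\<in>E. tx e = v} + (if v = x then l else 0))"
        by (simp add: sum.distrib)
      also have "\<dots> = (\<Sum>v\<in>X. k)" using tx2 XV by (intro sum.cong) auto
      also have "\<dots> = k * card X" by simp
      finally have "card {e\<in>E. tx e \<in> X} + l = k * card X" .
      moreover have "card {e\<in>E. fst (ep e) \<in> X \<and> snd (ep e) \<in> X} \<le> card {e\<in>E. tx e \<in> X}"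
        using sub fE by (intro card_mono) auto
      ultimately show ?thesis by linarith
    qed
    have lvc: "\<forall>X. X \<subseteq> V - {r} \<and> X \<noteq> {} \<longrightarrow> l \<le> lv E t h X"
    proof (intro allI impI)
      fix X assume X: "X \<subseteq> V - {r} \<and> X \<noteq> {}"
      then obtain x where xX: "x \<in> X" by blast
      have XV: "X \<subseteq> V" using X by blast
      have fX: "finite X" using XV fV finite_subset by blast
      have "card {e\<in>E. t e \<in> X} = (\<Sum>v\<in>X. card {e\<in>E. t e = v})"
        using card_tail_sum[OF fE fX] .
      also have "\<dots> = (\<Sum>v\<in>X. k)"
      proof (intro sum.cong refl)
        fix v assume "v \<in> X"
        hence "v \<in> V" "v \<noteq> r" using X by auto
        thus "card {e\<in>E. t e = v} = k" using tc by force
      qed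
      also have "\<dots> = k * card X" by simp
      finally have c1: "card {e\<in>E. t e \<in> X} = k * card X" .
      have eq: "{e\<in>E. t e \<in> X} = {e\<in>E. t e \<in> X \<and> h e \<in> X} \<union> {e\<in>E. t e \<in> X \<and> h e \<notin> X}" by auto
      have c2: "card {e\<in>E. t e \<in> X} = card {e\<in>E. t e \<in> X \<and> h e \<in> X} + lv E t h X"
        unfolding lv_def by (subst eq, rule card_Un_disjoint) (use fE in auto)
      have "{e\<in>E. t e \<in> X \<and> h e \<in> X} \<subseteq> {e\<in>E. fst (ep e) \<in> X \<and> snd (ep e) \<in> X}"
      proof
        fix e assume e: "e \<in> {e\<in>E. t e \<in> X \<and> h e \<in> X}"
        hence "ep e = (t e, h e) \<or> ep e = (h e, t e)" using ep_th[of t e ep] tl unfolding h_def by auto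
        thus "e \<in> {e\<in>E. fst (ep e) \<in> X \<and> snd (ep e) \<in> X}" using e by auto
      qed
      hence "card {e\<in>E. t e \<in> X \<and> h e \<in> X} \<le> card {e\<in>E. fst (ep e) \<in> X \<and> snd (ep e) \<in> X}"
        using fE by (intro card_mono) auto
      with sp[OF xX XV] c1 c2 show "l \<le> lv E t h X" by linarith
    qed
    obtain A where A1: "\<forall>i<l. A i \<subseteq> E \<and> parb V r t h (A i)"
      and A2: "\<forall>i<l. \<forall>j<l. i \<noteq> j \<longrightarrow> A i \<inter> A j = {}"
      using edmonds[OF fV rV fE tV lvc] by blast
    have trees: "\<forall>i<l. spanning_tree V (A i) ep"
    proof (intro allI impI)
      fix i assume "i < l"
      hence "A i \<subseteq> E" "parb V r t (hd_of ep t) (A i)" using A1 unfolding h_def by auto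
      thus "spanning_tree V (A i) ep" using arb_tree[OF _ rV] tl by blast
    qed
    define S where "S = E - (\<Union>i<l. A i)"
    have Sc: "\<forall>v\<in>V. card {e\<in>S. t e = v} = k - l"
    proof
      fix v assume v: "v \<in> V"
      have eq: "{e\<in>E. t e = v} = {e\<in>S. t e = v} \<union> (\<Union>i<l. {e\<in>A i. t e = v})"
        unfolding S_def using A1 by auto
      have fA: "\<forall>i<l. finite (A i)" using A1 fE finite_subset by blast
      have cU: "card (\<Union>i<l. {e\<in>A i. t e = v}) = (\<Sum>i<l. card {e\<in>A i. t e = v})"
        using fA A2 by (intro card_UN_disjoint) auto
      have cA: "card {e\<in>A i. t e = v} = (if v = r then 0 else 1)" if i: "i < l" for i
      proof -
        have pb: "parb V r t h (A i)" using A1 i by blast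
        show ?thesis
        proof (cases "v = r")
          case True
          have "{e\<in>A i. t e = v} = {}" using pb True unfolding parb_def by auto
          hence "card {e\<in>A i. t e = v} = 0" by (simp only: card.empty)
          thus ?thesis using True by simp
        next
          case False
          thus ?thesis using pb v unfolding parb_def by auto
        qed
      qed
      have "card {e\<in>E. t e = v} = card {e\<in>S. t e = v} + card (\<Union>i<l. {e\<in>A i. t e = v})"
        unfolding eq using fE fA unfolding S_def by (intro card_Un_disjoint) auto
      also have "card (\<Union>i<l. {e\<in>A i. t e = v}) = (if v = r then 0 else l)"
        using cU cA by simp
      finally show "card {e\<in>S. t e = v} = k - l" using tc v by (auto split: if_splits)
    qed
    obtain g where g1: "\<forall>e\<in>S. g e < k - l" and g2: "\<forall>j<k - l. is_map V {e\<in>S. g e = j} ep"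
      using orient_split[of S t ep V "k - l"] fE tl Sc tV unfolding S_def by auto
    define idx where "idx e = (THE i. i < l \<and> e \<in> A i)" for e
    have idx: "idx e = i" if "i < l" "e \<in> A i" for e i
      unfolding idx_def using that A2 by (intro the_equality) auto
    define c where "c e = (if \<exists>i<l. e \<in> A i then idx e else l + g e)" for e
    have cl: "\<forall>e\<in>E. c e < k"
    proof
      fix e assume e: "e \<in> E"
      show "c e < k"
      proof (cases "\<exists>i<l. e \<in> A i")
        case True
        then obtain i where "i < l" "e \<in> A i" by blast
        thus ?thesis using idx lk unfolding c_def by auto
      next
        case False
        hence "e \<in> S" using e unfolding S_def by auto
        thus ?thesis using g1 False lk unfolding c_def by fastforce
      qed
    qed
    have ct: "{e\<in>E. c e = i} = A i" if i: "i < l" for i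
    proof
      show "{e\<in>E. c e = i} \<subseteq> A i"
      proof
        fix e assume e: "e \<in> {e\<in>E. c e = i}"
        show "e \<in> A i"
        proof (cases "\<exists>j<l. e \<in> A j")
          case True
          then obtain j where j: "j < l" "e \<in> A j" by blast
          hence "c e = j" using idx unfolding c_def by auto
          thus ?thesis using e j by auto
        next
          case False
          hence "c e = l + g e" unfolding c_def by (simp only: if_False)
          hence "c e \<ge> l" by simp
          thus ?thesis using e i by auto
        qed
      qed
      show "A i \<subseteq> {e\<in>E. c e = i}"
      proof
        fix e assume e: "e \<in> A i"
        hence "c e = i" using idx i unfolding c_def by auto
        thus "e \<in> {e\<in>E. c e = i}" using e A1 i by auto
      qed
    qed
    have cm: "{e\<in>E. c e = i} = {e\<in>S. g e = i - l}" if i: "l \<le> i" for i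
    proof
      show "{e\<in>E. c e = i} \<subseteq> {e\<in>S. g e = i - l}"
      proof
        fix e assume e: "e \<in> {e\<in>E. c e = i}"
        show "e \<in> {e\<in>S. g e = i - l}"
        proof (cases "\<exists>j<l. e \<in> A j")
          case True
          then obtain j where j: "j < l" "e \<in> A j" by blast
          hence "c e = j" using idx unfolding c_def by auto
          thus ?thesis using e j i by auto
        next
          case False
          thus ?thesis using e unfolding c_def S_def by auto
        qed
      qed
      show "{e\<in>S. g e = i - l} \<subseteq> {e\<in>E. c e = i}"
      proof
        fix e assume e: "e \<in> {e\<in>S. g e = i - l}"
        hence "\<not> (\<exists>j<l. e \<in> A j)" "e \<in> E" unfolding S_def by auto
        thus "e \<in> {e\<in>E. c e = i}" using e i unfolding c_def by auto
      qed
    qed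
    have maps: "\<forall>i. l \<le> i \<and> i < k \<longrightarrow> is_map V {e\<in>E. c e = i} ep"
    proof (intro allI impI)
      fix i assume i: "l \<le> i \<and> i < k"
      hence "i - l < k - l" by (simp add: diff_less_mono)
      thus "is_map V {e\<in>E. c e = i} ep" using g2 cm i by simp
    qed
    show ?thesis unfolding trees_and_maps_def
      using cl ct trees maps by (intro exI[of _ c]) simp
  qed
qed



lemma tree_parent:
  assumes conn: "connected_on V T ep" and aV: "a \<in> V"
  shows "\<exists>p. (\<forall>v\<in>V - {a}. p v \<in> T \<and> (\<exists>w. ep (p v) = (v, w) \<or> ep (p v) = (w, v))) \<and> inj_on p (V - {a})"
proof -
  define dist where "dist v = (LEAST n. \<exists>vs es. walk T ep vs es \<and> hd vs = v \<and> last vs = a \<and> length es = n)" for v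
  have dle: "dist v \<le> length es" if "walk T ep vs es" "hd vs = v" "last vs = a" for v vs es
    unfolding dist_def using that by (intro Least_le) blast
  have ex: "\<exists>e w. e \<in> T \<and> (ep e = (v, w) \<or> ep e = (w, v)) \<and> dist w < dist v" if v: "v \<in> V - {a}" for v
  proof -
    have "\<exists>vs es. walk T ep vs es \<and> hd vs = v \<and> last vs = a" using conn v aV unfolding connected_on_def by blast
    hence "\<exists>n vs es. walk T ep vs es \<and> hd vs = v \<and> last vs = a \<and> length es = n" by blast
    hence "\<exists>vs es. walk T ep vs es \<and> hd vs = v \<and> last vs = a \<and> length es = dist v"
      unfolding dist_def by (rule LeastI_ex)
    then obtain vs es where w: "walk T ep vs es" "hd vs = v" "last vs = a" "length es = dist v" by blast
    show ?thesis
    proof (cases es)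
      case Nil
      hence "length vs = 1" using w by (simp add: walk_def)
      then obtain u where "vs = [u]" by (metis One_nat_def length_0_conv length_Suc_conv)
      thus ?thesis using w v by auto
    next
      case (Cons e es')
      obtain u vs' where vs: "vs = u # vs'" using w by (cases vs) (auto simp: walk_def)
      have a: "e \<in> T" "ep e = (u, hd vs') \<or> ep e = (hd vs', u)" "vs' \<noteq> []" "walk T ep vs' es'"
        using w(1) unfolding vs Cons by (auto simp: walk_Cons)
      have "last vs' = a" using w(3) a(3) vs by simp
      hence "dist (hd vs') \<le> length es'" using dle[OF a(4)] by blast
      also have "\<dots> < dist v" using w(4) Cons by simp
      finally show ?thesis using a w(2) vs by auto
    qed
  qed
  hence "\<forall>v. \<exists>e. v \<in> V - {a} \<longrightarrow> (\<exists>w. e \<in> T \<and> (ep e = (v, w) \<or> ep e = (w, v)) \<and> dist w < dist v)" by blast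
  from choice[OF this] obtain p where p: "\<forall>v\<in>V - {a}. \<exists>w. p v \<in> T \<and> (ep (p v) = (v, w) \<or> ep (p v) = (w, v)) \<and> dist w < dist v"
    by blast
  have "inj_on p (V - {a})"
  proof (rule inj_onI)
    fix v v' assume v: "v \<in> V - {a}" and v': "v' \<in> V - {a}" and eq: "p v = p v'"
    obtain w where w: "ep (p v) = (v, w) \<or> ep (p v) = (w, v)" "dist w < dist v" using p v by blast
    obtain w' where w': "ep (p v') = (v', w') \<or> ep (p v') = (w', v')" "dist w' < dist v'" using p v' by blast
    have E: "ep (p v) = ep (p v')" using eq by simp
    show "v = v'"
    proof (rule ccontr)
      assume ne: "v \<noteq> v'"
      have "(v = w' \<and> w = v')"
        using w(1) w'(1) E ne by (elim disjE) simp_all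
      thus False using w(2) w'(2) by simp
    qed
  qed
  thus ?thesis using p by blast
qed

lemma map_card:
  assumes "is_map V F ep" "finite F" "\<forall>e\<in>F. fst (ep e) \<in> V \<and> snd (ep e) \<in> V" "finite V"
  shows "card F = card V"
proof -
  obtain t where t: "\<forall>e\<in>F. t e = fst (ep e) \<or> t e = snd (ep e)" "\<forall>v\<in>V. card {e\<in>F. t e = v} = 1"
    using assms(1) unfolding is_map_def by blast
  have "F = {e\<in>F. t e \<in> V}" using t(1) assms(3) by auto
  hence "card F = (\<Sum>v\<in>V. card {e\<in>F. t e = v})" using card_tail_sum[OF assms(2) assms(4), of t] by simp
  also have "\<dots> = card V" using t(2) by simp
  finally show ?thesis .
qed

lemma arith_fact:
  fixes l a b s rest cE :: nat
  assumes "1 \<le> l" "s \<ge> Suc b + (l - 1) * b" "cE = s + a * Suc b" "cE + l = (l + a) * Suc b"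
  shows False
proof -
  obtain l' where l: "l = Suc l'" using assms(1) by (cases l) auto
  show False using assms unfolding l by (simp add: algebra_simps)
qed

lemma dir12:
  fixes V :: "'v set" and E :: "'e set" and ep :: "'e \<Rightarrow> 'v \<times> 'v" and k l :: nat
  assumes lk: "l \<le> k" and mg: "multigraph V E ep"
    and ce: "int (card E) = int k * int (card V) - int l"
    and tm: "trees_and_maps l k V E ep"
    and f: "\<forall>i<l. fst (f i) \<in> V \<and> snd (f i) \<in> V"
  shows "is_kmap k V (add_edges E l) (case_sum ep f)"
proof -
  have fV: "finite V" and fE: "finite E" and Ev: "\<forall>e\<in>E. fst (ep e) \<in> V \<and> snd (ep e) \<in> V"
    using mg unfolding multigraph_def by auto
  obtain c :: "'e \<Rightarrow> nat" where c1: "\<forall>e\<in>E. c e < k" and c2: "\<forall>i<l. spanning_tree V {e\<in>E. c e = i} ep"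
    and c3: "\<forall>i. l \<le> i \<and> i < k \<longrightarrow> is_map V {e\<in>E. c e = i} ep"
    using tm unfolding trees_and_maps_def by blast
  define C where "C i = {e\<in>E. c e = i}" for i
  define n where "n = card V"
  define a where "a i = fst (f i)" for i
  have aV: "i < l \<Longrightarrow> a i \<in> V" for i using f unfolding a_def by blast
  have fC: "finite (C i)" for i using fE unfolding C_def by simp
  have cE: "card E = (\<Sum>i<k. card (C i))"
  proof -
    have "E = (\<Union>i<k. C i)" using c1 unfolding C_def by auto
    moreover have "card (\<Union>i<k. C i) = (\<Sum>i<k. card (C i))"
      using fC by (intro card_UN_disjoint) (auto simp: C_def)
    ultimately show ?thesis by simp
  qed
  have mapc: "card (C i) = n" if "l \<le> i" "i < k" for i
    unfolding n_def C_def using c3 that fE Ev fV by (intro map_card) auto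
  have "\<forall>i. \<exists>p. i < l \<longrightarrow> (\<forall>v\<in>V - {a i}. p v \<in> C i \<and> (\<exists>w. ep (p v) = (v, w) \<or> ep (p v) = (w, v))) \<and> inj_on p (V - {a i})"
  proof
    fix i show "\<exists>p. i < l \<longrightarrow> (\<forall>v\<in>V - {a i}. p v \<in> C i \<and> (\<exists>w. ep (p v) = (v, w) \<or> ep (p v) = (w, v))) \<and> inj_on p (V - {a i})"
    proof (cases "i < l")
      case True
      hence "connected_on V (C i) ep" using c2 unfolding C_def spanning_tree_def by blast
      thus ?thesis using tree_parent[OF _ aV[OF True]] by blast
    qed simp
  qed
  from choice[OF this] obtain P where P: "\<And>i. i < l \<Longrightarrow> (\<forall>v\<in>V - {a i}. P i v \<in> C i \<and> (\<exists>w. ep (P i v) = (v, w) \<or> ep (P i v) = (w, v))) \<and> inj_on (P i) (V - {a i})"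
    by blast
  have cimg: "card (P i ` (V - {a i})) = n - 1" if i: "i < l" for i
  proof -
    have "card (P i ` (V - {a i})) = card (V - {a i})" using P[OF i] by (intro card_image) blast
    thus ?thesis using aV[OF i] fV unfolding n_def by simp
  qed
  have isub: "P i ` (V - {a i}) \<subseteq> C i" if i: "i < l" for i using P[OF i] by blast
  have ceq: "card (C i) = n - 1" if i: "i < l" for i
  proof (rule ccontr)
    assume ne: "card (C i) \<noteq> n - 1"
    have "n - 1 \<le> card (C i)" using card_mono[OF fC isub[OF i]] cimg[OF i] by simp
    hence big: "card (C i) \<ge> n" using ne by simp
    have n1: "n \<ge> 1" using aV[OF i] fV unfolding n_def by (metis One_nat_def Suc_leI card_gt_0_iff empty_iff)
    obtain b where b: "n = Suc b" using n1 by (cases n) auto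
    define s where "s = (\<Sum>j<l. card (C j))"
    have "s = card (C i) + (\<Sum>j\<in>{..<l} - {i}. card (C j))"
      unfolding s_def using i by (simp add: sum.remove)
    moreover have "(\<Sum>j\<in>{..<l} - {i}. card (C j)) \<ge> (\<Sum>j\<in>{..<l} - {i}. b)"
    proof (rule sum_mono)
      fix j assume "j \<in> {..<l} - {i}"
      hence j: "j < l" by simp
      have "n - 1 \<le> card (C j)" using card_mono[OF fC isub[OF j]] cimg[OF j] by simp
      thus "b \<le> card (C j)" using b by simp
    qed
    moreover have "(\<Sum>j\<in>{..<l} - {i}. b) = (l - 1) * b" using i by simp
    ultimately have s1: "s \<ge> Suc b + (l - 1) * b" using big b by linarith
    have "(\<Sum>j<k. card (C j)) = s + (\<Sum>j\<in>{l..<k}. card (C j))"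
      unfolding s_def using lk by (simp add: lessThan_atLeast0 sum.atLeastLessThan_concat)
    also have "(\<Sum>j\<in>{l..<k}. card (C j)) = (\<Sum>j\<in>{l..<k}. n)"
      by (rule sum.cong[OF refl]) (simp add: mapc)
    also have "\<dots> = (k - l) * Suc b" using b by simp
    finally have s2: "card E = s + (k - l) * Suc b" using cE by simp
    have s3: "card E + l = (l + (k - l)) * Suc b"
    proof -
      have "l + (k - l) = k" using lk by simp
      moreover have "int (card E + l) = int (k * Suc b)" using ce b unfolding n_def by (simp add: algebra_simps)
      ultimately show ?thesis by (simp only: of_nat_eq_iff)
    qed
    show False using arith_fact[OF _ s1 s2 s3] i by simp
  qed
  have img: "P i ` (V - {a i}) = C i" if i: "i < l" for i
    using isub[OF i] fC cimg[OF i] ceq[OF i] by (intro card_subset_eq) auto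
  define c' where "c' = case_sum c (\<lambda>i::nat. i)"
  have cls: "{x\<in>add_edges E l. c' x = i} = Inl ` C i \<union> (if i < l then {Inr i} else {})" for i
    unfolding add_edges_def c'_def C_def by auto
  show ?thesis unfolding is_kmap_def
  proof (rule exI[of _ c'], intro conjI allI impI ballI)
    fix x assume "x \<in> add_edges E l"
    thus "c' x < k" using c1 lk unfolding add_edges_def c'_def by auto
  next
    fix i assume ik: "i < k"
    show "is_map V {x\<in>add_edges E l. c' x = i} (case_sum ep f)"
    proof (cases "i < l")
      case True
      define t' where "t' = case_sum (\<lambda>e. inv_into (V - {a i}) (P i) e) (\<lambda>_::nat. a i)"
      have inv: "e \<in> C i \<Longrightarrow> inv_into (V - {a i}) (P i) e \<in> V - {a i} \<and> P i (inv_into (V - {a i}) (P i) e) = e" for e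
        using img[OF True] by (metis inv_into_into f_inv_into_f)
      show ?thesis unfolding is_map_def
      proof (rule exI[of _ t'], intro conjI ballI)
        fix x assume x: "x \<in> {x\<in>add_edges E l. c' x = i}"
        hence "x \<in> Inl ` C i \<or> x = Inr i" using cls[of i] True by auto
        thus "t' x = fst (case_sum ep f x) \<or> t' x = snd (case_sum ep f x)"
        proof
          assume "x \<in> Inl ` C i"
          then obtain e where e: "x = Inl e" "e \<in> C i" by blast
          define v where "v = inv_into (V - {a i}) (P i) e"
          have "v \<in> V - {a i}" "P i v = e" using inv[OF e(2)] unfolding v_def by auto
          then obtain w where "ep e = (v, w) \<or> ep e = (w, v)" using P[OF True] by blast
          moreover have "t' x = v" using e unfolding t'_def v_def by simp
          ultimately show ?thesis using e by auto
        next
          assume "x = Inr i" thus ?thesis unfolding t'_def a_def by simp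
        qed
      next
        fix v assume v: "v \<in> V"
        show "card {x\<in>{x\<in>add_edges E l. c' x = i}. t' x = v} = 1"
        proof (cases "v = a i")
          case vt: True
          have "{x\<in>{x\<in>add_edges E l. c' x = i}. t' x = v} = {Inr i}"
          proof -
            have "\<forall>e\<in>C i. t' (Inl e) \<noteq> v" using inv vt unfolding t'_def by auto
            moreover have "t' (Inr i) = v" using vt unfolding t'_def by simp
            ultimately show ?thesis unfolding cls using True by auto
          qed
          thus ?thesis by simp
        next
          case vf: False
          have pv: "P i v \<in> C i" using P[OF True] v vf by blast
          have "{x\<in>{x\<in>add_edges E l. c' x = i}. t' x = v} = {Inl (P i v)}"
          proof -
            have "\<forall>e\<in>C i. t' (Inl e) = v \<longleftrightarrow> e = P i v"
            proof
              fix e assume e: "e \<in> C i"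
              have "inv_into (V - {a i}) (P i) (P i v) = v" using P[OF True] v vf by (intro inv_into_f_f) auto
              thus "t' (Inl e) = v \<longleftrightarrow> e = P i v" using inv[OF e] unfolding t'_def by auto
            qed
            moreover have "t' (Inr i) \<noteq> v" using vf unfolding t'_def by simp
            ultimately show ?thesis unfolding cls using True pv by auto
          qed
          thus ?thesis by simp
        qed
      qed
    next
      case False
      obtain t where t: "\<forall>e\<in>C i. t e = fst (ep e) \<or> t e = snd (ep e)" "\<forall>v\<in>V. card {e\<in>C i. t e = v} = 1"
      proof -
        have "is_map V (C i) ep" using c3 False ik unfolding C_def by simp
        thus ?thesis using that unfolding is_map_def by blast
      qed
      define t' where "t' = case_sum t (\<lambda>_::nat. undefined)"
      show ?thesis unfolding is_map_def
      proof (rule exI[of _ t'], intro conjI ballI)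
        fix x assume "x \<in> {x\<in>add_edges E l. c' x = i}"
        hence "x \<in> Inl ` C i" using cls[of i] False by auto
        thus "t' x = fst (case_sum ep f x) \<or> t' x = snd (case_sum ep f x)" using t unfolding t'_def by auto
      next
        fix v assume v: "v \<in> V"
        have "{x\<in>{x\<in>add_edges E l. c' x = i}. t' x = v} = Inl ` {e\<in>C i. t e = v}"
          unfolding cls using False unfolding t'_def by auto
        moreover have "card (Inl ` {e\<in>C i. t e = v}) = card {e\<in>C i. t e = v}"
          by (intro card_image) (simp add: inj_on_def)
        ultimately show "card {x\<in>{x\<in>add_edges E l. c' x = i}. t' x = v} = 1" using t v by simp
      qed
    qed
  qed
qed


theorem corollary1:
  fixes V :: "'v set" and E :: "'e set" and ep :: "'e \<Rightarrow> 'v \<times> 'v" and k l :: nat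
  assumes "k \<ge> 1" and "l \<le> k"
    and "multigraph V E ep"
    and "int (card E) = int k * int (card V) - int l"
  shows "trees_and_maps l k V E ep \<longleftrightarrow>
    (\<forall>f :: nat \<Rightarrow> 'v \<times> 'v. (\<forall>i<l. fst (f i) \<in> V \<and> snd (f i) \<in> V) \<longrightarrow>
        is_kmap k V (add_edges E l) (case_sum ep f))"
proof
  assume tm: "trees_and_maps l k V E ep"
  show "\<forall>f :: nat \<Rightarrow> 'v \<times> 'v. (\<forall>i<l. fst (f i) \<in> V \<and> snd (f i) \<in> V) \<longrightarrow>
        is_kmap k V (add_edges E l) (case_sum ep f)"
    using dir12[OF assms(2) assms(3) assms(4) tm] by blast
next
  assume "\<forall>f :: nat \<Rightarrow> 'v \<times> 'v. (\<forall>i<l. fst (f i) \<in> V \<and> snd (f i) \<in> V) \<longrightarrow>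
        is_kmap k V (add_edges E l) (case_sum ep f)"
  thus "trees_and_maps l k V E ep" using dir21[OF assms(2) assms(3)] by blast
qed

end
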